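(* For every $q,r\in(0,\infty)$ there exists a constant $C=C(q,r)$ such that for every function $f\in L^q_\nu(\ell^r_\omega)$ on $X=\mathbb R\times(0,\infty)\times\mathbb R$ there exists $J=J(q,r,f)\in\mathbb N$ with $$\|f1_{X_J}\|_{L^q_\nu(\ell^r_\omega)}\le\|f\|_{L^q_\nu(\ell^r_\omega)}\le C\|f1_{X_J}\|_{L^q_\nu(\ell^r_\omega)},$$ where $X_J=(-2^JJ,2^JJ]\times(2^{-J},2^J]\times(-2^JJ,2^JJ]$.
   Context: $\omega$ is Lebesgue measure on $X$. Dyadic intervals $I(m,l)=(2^lm,2^l(m+1)]$; tiles $H(m,l,n)=I(m,l)\times(2^{l-1},2^l]\times I(n,-l)$. Dyadic trees $T(m,l,n)=\bigcup_{l'\le l}\bigcup_{m':\,I(m',l')\subseteq I(m,l)}H(m',l',N(n,l'))$ ($N(n,l')$ the integer with $I(n,-l)\subseteq I(N(n,l'),-l')$) form $\mathcal T$, with $\tau(T(m,l,n))=2^l$; $\nu(A)=\inf\{\sum_{S\in\mathcal S'}\tau(S):\mathcal S'\subseteq\mathcal T,A\subseteq\bigcup\mathcal S'\}$. For $\omega$-measurable $f$: $\ell^r_\omega(f)(T)=\nu(T)^{-1/r}\|f1_T\|_{L^r(X,\omega)}$ for $T\in\mathcal T$; $\|f\|_{L^\infty_\nu(\ell^r_\omega)}=\sup_{T\in\mathcal T}\ell^r_\omega(f)(T)$; $\nu(\ell^r_\omega(f)>\lambda)=\inf\{\nu(B):B\text{ measurable},\|f1_{X\setminus B}\|_{L^\infty_\nu(\ell^r_\omega)}\le\lambda\}$;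 $\|f\|_{L^q_\nu(\ell^r_\omega)}=(\int_0^\infty q\lambda^{q-1}\nu(\ell^r_\omega(f)>\lambda)d\lambda)^{1/q}$, and $f\in L^q_\nu(\ell^r_\omega)$ means this is finite. *)

theory Defs
  imports "HOL-Analysis.Analysis"
begin

type_synonym pt = "real \<times> real \<times> real"

definition Xsp :: "pt set" where
  "Xsp = {(x, s, \<xi>). s > 0}"

abbreviation omega :: "pt measure" where
  "omega \<equiv> lebesgue_on Xsp"

definition enn_powr :: "ennreal \<Rightarrow> real \<Rightarrow> ennreal" where
  "enn_powr a p = (if a = \<infinity> then \<infinity> else ennreal (enn2real a powr p))"

definition dyI :: "int \<Rightarrow> int \<Rightarrow> real set" where
  "dyI m l = {(2::real) powi l * of_int m <.. (2::real) powi l * (of_int m + 1)}"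

definition tile :: "int \<Rightarrow> int \<Rightarrow> int \<Rightarrow> pt set" where
  "tile m l n = dyI m l \<times> {(2::real) powi (l - 1) <.. (2::real) powi l} \<times> dyI n (- l)"

definition Nidx :: "int \<Rightarrow> int \<Rightarrow> int \<Rightarrow> int" where
  "Nidx n l l' = (THE k. dyI n (- l) \<subseteq> dyI k (- l'))"

definition tree :: "int \<Rightarrow> int \<Rightarrow> int \<Rightarrow> pt set" where
  "tree m l n = (\<Union>l'\<in>{..l}. \<Union>m'\<in>{m'. dyI m' l' \<subseteq> dyI m l}. tile m' l' (Nidx n l l'))"

definition tau :: "int \<times> int \<times> int \<Rightarrow> ennreal" where
  "tau t = (case t of (m, l, n) \<Rightarrow> ennreal ((2::real) powi l))"

definition nu :: "pt set \<Rightarrow> ennreal" where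
  "nu A = (INF S \<in> {S. A \<subseteq> (\<Union>(m, l, n)\<in>S. tree m l n)}. \<integral>\<^sup>+ t. tau t \<partial>count_space S)"

definition Lr_norm :: "real \<Rightarrow> (pt \<Rightarrow> complex) \<Rightarrow> ennreal" where
  "Lr_norm r f = enn_powr (\<integral>\<^sup>+ x. ennreal (norm (f x) powr r) \<partial>omega) (1 / r)"

definition ell :: "real \<Rightarrow> (pt \<Rightarrow> complex) \<Rightarrow> pt set \<Rightarrow> ennreal" where
  "ell r f T = Lr_norm r (\<lambda>x. indicator T x * f x) / enn_powr (nu T) (1 / r)"

definition Linf_nu :: "real \<Rightarrow> (pt \<Rightarrow> complex) \<Rightarrow> ennreal" where
  "Linf_nu r f = (SUP (m, l, n) \<in> UNIV. ell r f (tree m l n))"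

definition super_level :: "real \<Rightarrow> (pt \<Rightarrow> complex) \<Rightarrow> real \<Rightarrow> ennreal" where
  "super_level r f lam = (INF B \<in> {B. B \<in> sets omega \<and>
       Linf_nu r (\<lambda>x. indicator (Xsp - B) x * f x) \<le> ennreal lam}. nu B)"

definition Lq_nu :: "real \<Rightarrow> real \<Rightarrow> (pt \<Rightarrow> complex) \<Rightarrow> ennreal" where
  "Lq_nu q r f = enn_powr
     (\<integral>\<^sup>+ lam\<in>{0<..}. ennreal (q * lam powr (q - 1)) * super_level r f lam \<partial>lborel) (1 / q)"

definition XJ :: "nat \<Rightarrow> pt set" where
  "XJ J = {(2::real) ^ J * (- real J) <.. 2 ^ J * real J}
          \<times> {(2::real) powi (- int J) <.. 2 ^ J}
          \<times> {(2::real) ^ J * (- real J) <.. 2 ^ J * real J}"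

end

theory Submission
  imports Defs "HOL-Library.Diagonal_Subsequence"
begin


lemma enn_powr_mono:
  assumes "a \<le> b" "0 < e"
  shows "enn_powr a e \<le> enn_powr b e"
proof (cases "b = \<infinity>")
  case True thus ?thesis by (simp add: enn_powr_def)
next
  case False
  then have "a \<noteq> \<infinity>" using assms(1) top.extremum_unique by fastforce
  moreover have "enn2real a \<le> enn2real b" using enn2real_mono[OF assms(1)] False by (simp add: top.not_eq_extremum)
  ultimately show ?thesis using False assms
    by (auto simp: enn_powr_def intro!: ennreal_leI powr_mono2)
qed

lemma space_omega[simp]: "space omega = Xsp"
  by (simp add: space_restrict_space)

lemma Lr_norm_mono:
  assumes "\<And>x. norm (f x) \<le> norm (g x)" "0 < r"
  shows "Lr_norm r f \<le> Lr_norm r g"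
  unfolding Lr_norm_def
  using assms
  by (intro enn_powr_mono nn_integral_mono ennreal_leI powr_mono2) auto

lemma ell_mono:
  assumes "\<And>x. norm (f x) \<le> norm (g x)" "0 < r"
  shows "ell r f T \<le> ell r g T"
  unfolding ell_def divide_ennreal_def
  by (intro mult_right_mono Lr_norm_mono) (auto simp: norm_mult assms mult_left_mono)

lemma Linf_mono:
  assumes "\<And>x. norm (f x) \<le> norm (g x)" "0 < r"
  shows "Linf_nu r f \<le> Linf_nu r g"
  unfolding Linf_nu_def
  by (rule SUP_subset_mono) (auto simp: split_beta intro: ell_mono[OF assms])

lemma super_level_mono:
  assumes "\<And>x. norm (f x) \<le> norm (g x)" "0 < r"
  shows "super_level r f lam \<le> super_level r g lam"
  unfolding super_level_def
proof (rule INF_superset_mono)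
  show "{B \<in> sets omega. Linf_nu r (\<lambda>x. indicator (Xsp - B) x * g x) \<le> ennreal lam}
     \<subseteq> {B \<in> sets omega. Linf_nu r (\<lambda>x. indicator (Xsp - B) x * f x) \<le> ennreal lam}"
  proof safe
    fix B assume "B \<in> sets omega" "Linf_nu r (\<lambda>x. indicator (Xsp - B) x * g x) \<le> ennreal lam"
    moreover have "Linf_nu r (\<lambda>x. indicator (Xsp - B) x * f x) \<le> Linf_nu r (\<lambda>x. indicator (Xsp - B) x * g x)"
      by (rule Linf_mono) (auto simp: norm_mult assms mult_left_mono)
    ultimately show "Linf_nu r (\<lambda>x. indicator (Xsp - B) x * f x) \<le> ennreal lam" by simp
  qed
qed simp

lemma super_level_anti:
  assumes "lam \<le> lam'"
  shows "super_level r f lam' \<le> super_level r f lam"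
  unfolding super_level_def
  by (rule INF_superset_mono) (auto intro: order_trans ennreal_leI[OF assms])

lemma Lq_mono:
  assumes "\<And>x. norm (f x) \<le> norm (g x)" "0 < r" "0 < q"
  shows "Lq_nu q r f \<le> Lq_nu q r g"
  unfolding Lq_nu_def
  by (intro enn_powr_mono nn_integral_mono mult_right_mono mult_left_mono super_level_mono assms) (auto simp: assms)



lemma pow2_pos[simp]: "(0::real) < 2 powi l"
  by simp

lemma dyI_unique:
  assumes "y \<in> dyI k1 a" "y \<in> dyI k2 a"
  shows "k1 = k2"
proof -
  define c :: real where "c = 2 powi a"
  have c: "c > 0" by (simp add: c_def)
  have h: "c * k1 < y" "y \<le> c * (k1 + 1)" "c * k2 < y" "y \<le> c * (k2 + 1)"
    using assms by (auto simp: dyI_def c_def)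
  have "c * k1 < c * (k2 + 1)" "c * k2 < c * (k1 + 1)"
    using h by linarith+
  then have "real_of_int k1 < k2 + 1" "real_of_int k2 < k1 + 1"
    using c by (auto simp: mult_less_cancel_left)
  then show ?thesis by linarith
qed

lemma powi_split:
  assumes "l' \<le> l"
  shows "(2::real) powi (- l') = 2 powi (- l) * of_int ((2::int) ^ nat (l - l'))"
proof -
  have "- l' = - l + int (nat (l - l'))" using assms by simp
  then have "(2::real) powi (- l') = 2 powi (- l + int (nat (l - l')))"
    by simp
  also have "\<dots> = 2 powi (- l) * 2 powi (int (nat (l - l')))"
    by (rule power_int_add) auto
  also have "\<dots> = 2 powi (- l) * of_int ((2::int) ^ nat (l - l'))"
  proof -
    have "\<And>m::nat. (2::real) powi (int m) = of_int ((2::int)^m)" by simp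
    then show ?thesis by presburger
  qed
  finally show ?thesis .
qed

lemma Nidx_ex:
  assumes "l' \<le> l"
  shows "dyI n (- l) \<subseteq> dyI (n div 2 ^ nat (l - l')) (- l')"
proof
  fix y assume y: "y \<in> dyI n (- l)"
  define D :: int where "D = 2 ^ nat (l - l')"
  define k where "k = n div D"
  have D: "D > 0" by (simp add: D_def)
  have nk: "n = D * k + n mod D" unfolding k_def by (metis div_mult_mod_eq mult.commute)
  have m1: "0 \<le> n mod D" "n mod D < D" using D by auto
  have k1: "D * k \<le> n" using nk m1 by linarith
  have k2: "n + 1 \<le> D * (k + 1)" using nk m1 by (simp add: distrib_left)
  have k1r: "real_of_int (D * k) \<le> n" using k1 by linarith
  have k2r: "real_of_int n + 1 \<le> real_of_int (D * (k + 1))" using k2 by linarith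
  have e: "(2::real) powi (- l') = 2 powi (- l) * D" using powi_split[OF assms] by (simp add: D_def)
  have p: "(0::real) < 2 powi (- l)" by simp
  have "2 powi (- l') * real_of_int k = 2 powi (- l) * real_of_int (D * k)" by (simp add: e)
  also have "\<dots> \<le> 2 powi (- l) * n" using k1r p by (simp add: mult_left_mono)
  also have "\<dots> < y" using y by (simp add: dyI_def)
  finally have A: "2 powi (- l') * real_of_int k < y" .
  have "y \<le> 2 powi (- l) * (n + 1)" using y by (simp add: dyI_def)
  also have "\<dots> \<le> 2 powi (- l) * real_of_int (D * (k + 1))" using k2r p by (simp add: mult_left_mono)
  also have "\<dots> = 2 powi (- l') * (real_of_int k + 1)" by (simp add: e)
  finally show "y \<in> dyI (n div 2 ^ nat (l - l')) (- l')" using A by (simp add: dyI_def k_def D_def)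
qed

lemma dyI_top: "2 powi a * (of_int k + 1) \<in> dyI k a"
  by (simp add: dyI_def)

lemma Nidx_prop:
  assumes "l' \<le> l"
  shows "dyI n (- l) \<subseteq> dyI (Nidx n l l') (- l')"
proof -
  have "\<exists>!k. dyI n (- l) \<subseteq> dyI k (- l')"
  proof
    show "dyI n (- l) \<subseteq> dyI (n div 2 ^ nat (l - l')) (- l')" by (rule Nidx_ex[OF assms])
  next
    fix k assume "dyI n (- l) \<subseteq> dyI k (- l')"
    then show "k = n div 2 ^ nat (l - l')"
      using Nidx_ex[OF assms] dyI_top[of "-l" n] dyI_unique by blast
  qed
  then show ?thesis unfolding Nidx_def by (rule theI')
qed



lemma real_lt_pow2: "real n < (2::real) ^ n"
proof -
  have "n < 2 ^ n" by (rule less_exp)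
  then have "real n < real (2 ^ n)" by linarith
  then show ?thesis by simp
qed

lemma l_bound:
  assumes "0 < s" "s \<le> (2::real) powi l" "2 powi l \<le> M"
  shows "\<bar>real_of_int l\<bar> \<le> M + 1 / s"
proof (cases "0 \<le> l")
  case True
  then have "(2::real) powi l = 2 ^ nat l" by (simp add: power_int_def)
  moreover have "real (nat l) < 2 ^ nat l" by (rule real_lt_pow2)
  moreover have "0 \<le> 1 / s" using assms by simp
  moreover have "real_of_int l = real (nat l)" using True by simp
  ultimately show ?thesis using True assms by linarith
next
  case False
  then have "(2::real) powi l = inverse (2 ^ nat (- l))"
    by (metis add.inverse_inverse neg_0_le_iff_le nle_le power_int_minus power_int_of_nat int_nat_eq)
  then have e: "(2::real) ^ nat (- l) = 1 / 2 powi l" by (metis inverse_eq_divide inverse_inverse_eq)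
  have "1 / 2 powi l \<le> 1 / s" using assms by (intro divide_left_mono) auto
  moreover have "real (nat (- l)) < 2 ^ nat (- l)" by (rule real_lt_pow2)
  moreover have "0 \<le> M" using assms(1-3) by linarith
  ultimately show ?thesis using False e by simp
qed

lemma int_in_ceil_range:
  fixes k :: int and X :: real assumes "\<bar>real_of_int k\<bar> \<le> X"
  shows "k \<in> {-\<lceil>X\<rceil>..\<lceil>X\<rceil>}"
proof -
  have "real_of_int k \<le> X" "- X \<le> real_of_int k" using assms by linarith+
  then have "\<lceil>real_of_int k\<rceil> \<le> \<lceil>X\<rceil>" "\<lceil>- real_of_int k\<rceil> \<le> \<lceil>X\<rceil>"
    by (intro ceiling_mono; linarith)+
  moreover have "\<lceil>- real_of_int k\<rceil> = - k"
    by (metis ceiling_of_int of_int_minus)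
  ultimately have "k \<le> \<lceil>X\<rceil>" "- \<lceil>X\<rceil> \<le> k" by simp_all
  then show ?thesis by simp
qed

lemma finite_box:
  "finite {(m,l,n). \<bar>real_of_int m\<bar> \<le> A \<and> \<bar>real_of_int l\<bar> \<le> B \<and> \<bar>real_of_int n\<bar> \<le> C}"
proof (rule finite_subset)
  show "{(m,l,n). \<bar>real_of_int m\<bar> \<le> A \<and> \<bar>real_of_int l\<bar> \<le> B \<and> \<bar>real_of_int n\<bar> \<le> C}
    \<subseteq> {-\<lceil>A\<rceil>..\<lceil>A\<rceil>} \<times> {-\<lceil>B\<rceil>..\<lceil>B\<rceil>} \<times> {-\<lceil>C\<rceil>..\<lceil>C\<rceil>}"
  proof
    fix t assume "t \<in> {(m,l,n). \<bar>real_of_int m\<bar> \<le> A \<and> \<bar>real_of_int l\<bar> \<le> B \<and> \<bar>real_of_int n\<bar> \<le> C}"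
    then obtain m l n where "t = (m,l,n)" "\<bar>real_of_int m\<bar> \<le> A" "\<bar>real_of_int l\<bar> \<le> B" "\<bar>real_of_int n\<bar> \<le> C"
      by auto
    then show "t \<in> {-\<lceil>A\<rceil>..\<lceil>A\<rceil>} \<times> {-\<lceil>B\<rceil>..\<lceil>B\<rceil>} \<times> {-\<lceil>C\<rceil>..\<lceil>C\<rceil>}"
      using int_in_ceil_range by simp
  qed
qed simp

lemma tree_memE:
  assumes "x \<in> tree m l n"
  obtains l' m' where "l' \<le> l" "dyI m' l' \<subseteq> dyI m l" "x \<in> tile m' l' (Nidx n l l')"
  using assms unfolding tree_def by auto

lemma tree_bounds:
  assumes "(a, s, b) \<in> tree m l n" "2 powi l \<le> M"
  shows "0 < s \<and> \<bar>real_of_int m\<bar> \<le> \<bar>a\<bar> / s + 1 \<and> \<bar>real_of_int l\<bar> \<le> M + 1 / s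
     \<and> \<bar>real_of_int n\<bar> \<le> M * (\<bar>b\<bar> + 1 / s) + 1"
proof -
  obtain l' m' where l': "l' \<le> l" "dyI m' l' \<subseteq> dyI m l" "(a,s,b) \<in> tile m' l' (Nidx n l l')"
    using tree_memE[OF assms(1)] by blast
  define P :: real where "P = 2 powi l"
  define Q :: real where "Q = 2 powi l'"
  have P: "0 < P" and Q: "0 < Q" by (simp_all add: P_def Q_def)
  have QP: "Q \<le> P" unfolding P_def Q_def by (rule power_int_increasing) (use l' in auto)
  have sQ: "Q / 2 < s" "s \<le> Q" using l'(3)
    by (auto simp: tile_def Q_def power_int_diff)
  have s: "0 < s" using sQ Q by linarith
  have sP: "s \<le> P" using sQ QP by linarith
  have PM: "P \<le> M" using assms(2) by (simp add: P_def)
  have a: "a \<in> dyI m l" using l' by (auto simp: tile_def)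
  then have a1: "P * m < a" "a \<le> P * (m + 1)" by (auto simp: dyI_def P_def)
  have m1: "real_of_int m < a / P" using a1 P by (simp add: field_simps)
  have m2: "a / P \<le> real_of_int m + 1" using a1 P by (simp add: field_simps)
  have "\<bar>a / P\<bar> \<le> \<bar>a\<bar> / s" using P s sP by (simp add: abs_divide frac_le)
  then have mb: "\<bar>real_of_int m\<bar> \<le> \<bar>a\<bar> / s + 1" using m1 m2 by linarith
  define K where "K = Nidx n l l'"
  have bK: "b \<in> dyI K (- l')" using l' by (auto simp: tile_def K_def)
  have yK: "2 powi (- l) * (of_int n + 1) \<in> dyI K (- l')"
    using Nidx_prop[OF l'(1), of n] dyI_top[of "- l" n] unfolding K_def by blast
  have i1: "(2::real) powi (- l') = 1 / Q" by (simp add: Q_def power_int_minus_divide)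
  have i2: "(2::real) powi (- l) = 1 / P" by (simp add: P_def power_int_minus_divide)
  define y where "y = (of_int n + 1) / P"
  have "K / Q < b" "b \<le> (K + 1) / Q" "K / Q < y" "y \<le> (K + 1) / Q"
    using bK yK by (auto simp: dyI_def i1 i2 y_def)
  then have "\<bar>y - b\<bar> \<le> 1 / Q" by (simp add: add_divide_distrib) 
  moreover have "1 / Q \<le> 1 / s" using s sQ by (simp add: frac_le)
  ultimately have yb: "\<bar>y\<bar> \<le> \<bar>b\<bar> + 1 / s" by linarith
  have "of_int n + 1 = P * y" using P by (simp add: y_def)
  then have "\<bar>of_int n + 1\<bar> = P * \<bar>y\<bar>" using P by (simp add: abs_mult)
  also have "\<dots> \<le> M * (\<bar>b\<bar> + 1 / s)"
    using yb PM P by (intro mult_mono) auto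
  finally have nb: "\<bar>real_of_int n\<bar> \<le> M * (\<bar>b\<bar> + 1 / s) + 1" by linarith
  have lb: "\<bar>real_of_int l\<bar> \<le> M + 1 / s"
    using l_bound[OF s, of l M] sP PM by (simp add: P_def)
  show ?thesis using s mb lb nb by simp
qed

lemma finite_trees_at:
  "finite {(m,l,n). (a, s, b) \<in> tree m l n \<and> (2::real) powi l \<le> M}"
proof (rule finite_subset[OF _ finite_box[of "\<bar>a\<bar> / s + 1" "M + 1 / s" "M * (\<bar>b\<bar> + 1 / s) + 1"]])
  show "{(m,l,n). (a, s, b) \<in> tree m l n \<and> (2::real) powi l \<le> M} \<subseteq>
    {(m,l,n). \<bar>real_of_int m\<bar> \<le> \<bar>a\<bar> / s + 1 \<and> \<bar>real_of_int l\<bar> \<le> M + 1 / s \<and> \<bar>real_of_int n\<bar> \<le> M * (\<bar>b\<bar> + 1 / s) + 1}"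
    using tree_bounds by blast
qed



lemma times_borel:
  fixes A :: "'a::second_countable_topology set" and B :: "'b::second_countable_topology set"
  assumes "A \<in> sets borel" "B \<in> sets borel"
  shows "A \<times> B \<in> sets borel"
proof -
  have "A \<times> B \<in> sets (borel \<Otimes>\<^sub>M borel)" using assms by simp
  then show ?thesis by (metis borel_prod)
qed

lemma borel_leb: "A \<in> sets borel \<Longrightarrow> A \<in> sets lebesgue"
  by (metis sets_completionI_sets sets_lborel)

lemma Xsp_eq: "Xsp = UNIV \<times> {0<..} \<times> UNIV"
  by (auto simp: Xsp_def)

lemma Xsp_borel: "Xsp \<in> sets borel"
  unfolding Xsp_eq by (intro times_borel) auto

lemma dyI_borel: "dyI m l \<in> sets borel"
  by (simp add: dyI_def)

lemma tile_borel: "tile m l n \<in> sets borel"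
  unfolding tile_def by (intro times_borel dyI_borel) auto

lemma tree_borel: "tree m l n \<in> sets borel"
  unfolding tree_def
  by (intro sets.countable_UN' countable_Collect) (auto intro: tile_borel)

lemma tile_sub: "tile m l n \<subseteq> Xsp"
proof
  fix x assume "x \<in> tile m l n"
  then obtain a s b where x: "x = (a,s,b)" "2 powi (l - 1) < s" unfolding tile_def by auto
  moreover have p: "(0::real) < 2 powi (l - 1)" by simp
  ultimately have "0 < s" by linarith
  then show "x \<in> Xsp" unfolding Xsp_def x by auto
qed

lemma tree_sub: "tree m l n \<subseteq> Xsp"
  unfolding tree_def using tile_sub by blast

lemma UN_tree_borel: "(\<Union>(m, l, n)\<in>S. tree m l n) \<in> sets borel"
  by (intro sets.countable_UN') (auto simp: split_beta intro: tree_borel)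

lemma UN_tree_sub: "(\<Union>(m, l, n)\<in>S. tree m l n) \<subseteq> Xsp"
  using tree_sub by blast

lemma XJ_borel: "XJ J \<in> sets borel"
  unfolding XJ_def by (intro times_borel) auto

lemma sets_omega_iff: "A \<in> sets omega \<longleftrightarrow> A \<subseteq> Xsp \<and> A \<in> sets lebesgue"
  by (rule sets_restrict_space_iff) (simp add: Xsp_borel borel_leb)

lemma ind_meas:
  assumes "A \<in> sets borel"
  shows "(\<lambda>x. indicator A x :: complex) \<in> borel_measurable omega"
proof -
  have "(\<lambda>x. indicator A x :: complex) \<in> borel_measurable lebesgue"
    using assms borel_leb by (intro borel_measurable_indicator) auto
  then show ?thesis by (rule measurable_restrict_space1)
qed

lemma XJ_mono: "J \<le> J' \<Longrightarrow> XJ J \<subseteq> XJ J'"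
proof -
  assume "J \<le> J'"
  have a: "(2::real) ^ J * real J \<le> 2 ^ J' * real J'"
    using \<open>J \<le> J'\<close> by (intro mult_mono power_increasing) auto
  have b: "(2::real) powi (- int J') \<le> 2 powi (- int J)"
    using \<open>J \<le> J'\<close> by (intro power_int_increasing) auto
  have c: "(2::real) ^ J \<le> 2 ^ J'"
    using \<open>J \<le> J'\<close> by (intro power_increasing) auto
  show "XJ J \<subseteq> XJ J'"
  proof
    fix x assume "x \<in> XJ J"
    then obtain p s u where x: "x = (p,s,u)" "- (2 ^ J * real J) < p" "p \<le> 2 ^ J * real J"
      "2 powi (- int J) < s" "s \<le> 2 ^ J" "- (2 ^ J * real J) < u" "u \<le> 2 ^ J * real J"
      unfolding XJ_def by auto
    moreover have "s \<le> 2 ^ J'" using c x(5) by linarith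
    ultimately show "x \<in> XJ J'" unfolding XJ_def using a b by auto
  qed
qed

lemma XJ_cover:
  assumes "x \<in> Xsp"
  shows "\<exists>J0. x \<in> XJ J0"
proof -
  obtain a s b where x: "x = (a, s, b)" by (cases x) auto
  have s: "0 < s" using assms x by (simp add: Xsp_def)
  define J where "J = nat \<lceil>\<bar>a\<bar> + \<bar>b\<bar> + s + 1 / s\<rceil> + 1"
  have Jb: "\<bar>a\<bar> + \<bar>b\<bar> + s + 1 / s < real J" unfolding J_def by linarith
  have J1: "1 \<le> real J" unfolding J_def by simp
  have pJ: "real J < 2 ^ J" by (rule real_lt_pow2)
  have JJ: "real J \<le> 2 ^ J * real J" using J1 by simp
  have "0 < 1 / s" using s by simp
  then have "1 / s < 2 ^ J" using Jb pJ s by linarith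
  then have "1 < 2 ^ J * s" using s by (simp add: field_simps)
  then have "inverse ((2::real) ^ J) < s" using s by (simp add: field_simps)
  then have "(2::real) powi (- int J) < s" by (simp add: power_int_minus)
  moreover have "s \<le> 2 ^ J" using Jb pJ \<open>0 < 1/s\<close> by linarith
  moreover have "\<bar>a\<bar> < 2 ^ J * real J" "\<bar>b\<bar> < 2 ^ J * real J" using Jb JJ s \<open>0 < 1/s\<close> by linarith+
  ultimately have "x \<in> XJ J" unfolding XJ_def x by auto
  then show ?thesis by blast
qed



lemma const_subseq:
  fixes g :: "nat \<Rightarrow> bool"
  shows "\<exists>r::nat\<Rightarrow>nat. strict_mono r \<and> (\<exists>b. \<forall>k. g (r k) = b)"
proof (cases "infinite {k. g k}")
  case True
  have "\<forall>k. g (enumerate {k. g k} k) = True" using enumerate_in_set[OF True] by auto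
  then show ?thesis
    using strict_mono_enumerate[OF True] by blast
next
  case False
  have "infinite {k. \<not> g k}"
  proof
    assume "finite {k. \<not> g k}"
    with False have "finite ({k. g k} \<union> {k. \<not> g k})" by simp
    moreover have "{k. g k} \<union> {k. \<not> g k} = UNIV" by auto
    ultimately show False by simp
  qed
  then have "\<forall>k. g (enumerate {k. \<not> g k} k) = False" using enumerate_in_set by auto
  then show ?thesis
    using strict_mono_enumerate \<open>infinite {k. \<not> g k}\<close> by blast
qed

lemma subseq_sets:
  fixes SS :: "nat \<Rightarrow> ('a::countable) set"
  shows "\<exists>\<phi> S. strict_mono \<phi> \<and> (\<forall>t. \<forall>\<^sub>F k in sequentially. (t \<in> SS (\<phi> k)) = (t \<in> S))"
proof -
  define P where "P = (\<lambda>n (s::nat\<Rightarrow>nat). \<exists>b. \<forall>k. (from_nat n \<in> SS (s k)) = b)"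
  interpret subseqs P
  proof
    fix n and s :: "nat \<Rightarrow> nat" assume "strict_mono s"
    obtain r :: "nat \<Rightarrow> nat" where r: "strict_mono r" "\<exists>b. \<forall>k. (from_nat n \<in> SS (s (r k))) = b"
      using const_subseq[of "\<lambda>k. from_nat n \<in> SS (s k)"] by blast
    then show "\<exists>r'. strict_mono r' \<and> P n (s \<circ> r')" unfolding P_def by auto
  qed
  define S where "S = {t. \<forall>\<^sub>F k in sequentially. t \<in> SS (diagseq k)}"
  have "\<forall>\<^sub>F k in sequentially. (t \<in> SS (diagseq k)) = (t \<in> S)" for t
  proof -
    define n where "n = to_nat t"
    have tn: "from_nat n = t" by (simp add: n_def)
    have "P n (diagseq \<circ> ((+) (Suc n)))"
      by (rule diagseq_holds) (auto simp: P_def)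
    then obtain b where b: "\<And>k. (t \<in> SS (diagseq (Suc n + k))) = b"
      unfolding P_def tn by auto
    have ev: "\<forall>\<^sub>F k in sequentially. (t \<in> SS (diagseq k)) = b"
      unfolding eventually_sequentially
    proof (intro exI allI impI)
      fix k assume "Suc n \<le> k"
      then show "(t \<in> SS (diagseq k)) = b" using b[of "k - Suc n"] by simp
    qed
    show ?thesis
    proof (cases b)
      case True
      then have "t \<in> S" using ev unfolding S_def by (auto elim: eventually_mono)
      then show ?thesis using ev True by (auto elim: eventually_mono)
    next
      case False
      have "t \<notin> S"
      proof
        assume "t \<in> S"
        then have "\<forall>\<^sub>F k in sequentially. t \<in> SS (diagseq k)" by (simp add: S_def)
        moreover have "\<forall>\<^sub>F k in sequentially. t \<notin> SS (diagseq k)" using ev False by simp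
        ultimately have "\<forall>\<^sub>F k in sequentially. False" by (rule eventually_elim2) auto
        then show False by simp
      qed
      then show ?thesis using ev False by (auto elim: eventually_mono)
    qed
  qed
  then show ?thesis using subseq_diagseq by blast
qed

lemma nu_tree_le: "nu (tree m l n) \<le> ennreal (2 powi l)"
proof -
  have "nu (tree m l n) \<le> (\<integral>\<^sup>+ t. tau t \<partial>count_space {(m,l,n)})"
    unfolding nu_def by (rule INF_lower) auto
  also have "\<dots> = ennreal (2 powi l)"
    by (simp add: nn_integral_count_space_finite tau_def)
  finally show ?thesis .
qed

lemma nu_tree_fin: "nu (tree m l n) < \<infinity>"
  using nu_tree_le[of m l n] by (simp add: le_less_trans)

lemma tau_le_sum:
  assumes "t \<in> S"
  shows "tau t \<le> (\<integral>\<^sup>+ x. tau x \<partial>count_space S)"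
proof -
  have "tau t = (\<integral>\<^sup>+ x. tau x \<partial>count_space {t})"
    by (simp add: nn_integral_count_space_finite)
  also have "\<dots> = (\<integral>\<^sup>+ x. tau x * indicator {t} x \<partial>count_space UNIV)"
    by (rule nn_integral_count_space_indicator) simp
  also have "\<dots> \<le> (\<integral>\<^sup>+ x. tau x * indicator S x \<partial>count_space UNIV)"
    using assms by (intro nn_integral_mono mult_left_mono) (auto simp: indicator_def)
  also have "\<dots> = (\<integral>\<^sup>+ x. tau x \<partial>count_space S)"
    by (cases "S = UNIV") (simp_all add: nn_integral_count_space_indicator)
  finally show ?thesis .
qed

lemma powr_le_iff_base:
  fixes x y r :: real
  assumes "0 \<le> x" "0 \<le> y" "0 < r"
  shows "x powr r \<le> y powr r \<longleftrightarrow> x \<le> y"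
proof
  assume "x powr r \<le> y powr r"
  show "x \<le> y"
  proof (rule ccontr)
    assume "\<not> x \<le> y"
    then have "y powr r < x powr r" using assms by (intro powr_less_mono2) auto
    then show False using \<open>x powr r \<le> y powr r\<close> by simp
  qed
qed (use assms in \<open>auto intro: powr_mono2\<close>)

lemma ell_le_iff:
  assumes "nu T < \<infinity>" "0 < r" "0 \<le> lam"
  shows "ell r g T \<le> ennreal lam \<longleftrightarrow>
    (\<integral>\<^sup>+x. ennreal (norm (indicator T x * g x) powr r) \<partial>omega) \<le> ennreal (lam powr r) * nu T"
proof -
  define A where "A = (\<integral>\<^sup>+x. ennreal (norm (indicator T x * g x) powr r) \<partial>omega)"
  obtain d where d: "nu T = ennreal d" "0 \<le> d" using assms(1) by (cases "nu T") auto
  have ed: "enn_powr (nu T) (1 / r) = ennreal (d powr (1 / r))"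
    using d by (simp add: enn_powr_def)
  have ell: "ell r g T = enn_powr A (1 / r) / ennreal (d powr (1 / r))"
    unfolding ell_def Lr_norm_def A_def ed ..
  show ?thesis
  proof (cases "A = \<infinity>")
    case True
    have "ell r g T = \<infinity>" unfolding ell True by (simp add: enn_powr_def ennreal_top_divide)
    moreover have "ennreal (lam powr r) * nu T \<noteq> \<infinity>" using d by (simp add: ennreal_mult'[symmetric])
    ultimately show ?thesis using True A_def[symmetric] by (auto simp: top_unique)
  next
    case False
    then obtain a where a: "A = ennreal a" "0 \<le> a" by (cases A) auto
    have eA: "enn_powr A (1 / r) = ennreal (a powr (1 / r))" using a by (simp add: enn_powr_def)
    show ?thesis
    proof (cases "d = 0")
      case True
      then show ?thesis using a assms unfolding ell eA A_def[symmetric] d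
        by (auto simp: ennreal_eq_0_iff top_unique)
    next
      case dpos: False
      then have dp: "0 < d" using d by simp
      have "ell r g T = ennreal (a powr (1/r) / d powr (1/r))"
        unfolding ell eA using dp by (simp add: divide_ennreal)
      then have "ell r g T \<le> ennreal lam \<longleftrightarrow> a powr (1/r) / d powr (1/r) \<le> lam"
        using assms(3) by (simp add: ennreal_le_iff)
      also have "\<dots> \<longleftrightarrow> a powr (1/r) \<le> lam * d powr (1/r)"
        using dp by (simp add: divide_le_eq)
      also have "\<dots> \<longleftrightarrow> (a powr (1/r)) powr r \<le> (lam * d powr (1/r)) powr r"
        using assms a d by (intro powr_le_iff_base[symmetric]) auto
      also have "\<dots> \<longleftrightarrow> a \<le> lam powr r * d"
        using assms a d by (simp add: powr_powr powr_mult)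
      also have "\<dots> \<longleftrightarrow> A \<le> ennreal (lam powr r) * nu T"
        using a d by (simp add: ennreal_mult'[symmetric])
      finally show ?thesis unfolding A_def .
    qed
  qed
qed

lemma antimono_meas:
  fixes h :: "real \<Rightarrow> ennreal"
  assumes "\<And>x y. x \<le> y \<Longrightarrow> h y \<le> h x"
  shows "h \<in> borel_measurable lborel"
proof -
  have "h \<in> borel_measurable borel"
  proof (rule borel_measurableI_greater)
    fix y
    have "is_interval {x. y < h x}"
      unfolding is_interval_1 using assms by (auto intro: less_le_trans)
    then show "{x \<in> space borel. y < h x} \<in> sets borel"
      using real_interval_borel_measurable by simp
  qed
  then show ?thesis by (simp add: measurable_lborel1)
qed



definition UT :: "(int \<times> int \<times> int) set \<Rightarrow> pt set" where
  "UT S = (\<Union>(m, l, n)\<in>S. tree m l n)"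

lemma UT_borel: "UT S \<in> sets borel"
  unfolding UT_def by (rule UN_tree_borel)

lemma UT_omega: "UT S \<in> sets omega"
  unfolding sets_omega_iff UT_def using UN_tree_sub UN_tree_borel borel_leb by blast

lemma mem_UT: "x \<in> UT S \<longleftrightarrow> (\<exists>m l n. (m, l, n) \<in> S \<and> x \<in> tree m l n)"
  unfolding UT_def by auto

lemma cs_ind: "(\<integral>\<^sup>+x. g x \<partial>count_space S) = (\<integral>\<^sup>+x. g x * indicator S x \<partial>count_space UNIV)"
  by (cases "S = UNIV") (simp_all add: nn_integral_count_space_indicator)

lemma nu_UT: "nu (UT S) \<le> (\<integral>\<^sup>+ t. tau t \<partial>count_space S)"
  unfolding nu_def UT_def by (rule INF_lower) auto

lemma step1:
  fixes h :: "pt \<Rightarrow> complex"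
  assumes "super_level r h lam < ennreal M" "0 < r"
  shows "\<exists>S. (\<integral>\<^sup>+ t. tau t \<partial>count_space S) < ennreal M \<and>
             Linf_nu r (\<lambda>x. indicator (Xsp - UT S) x * h x) \<le> ennreal lam"
proof -
  obtain B where B: "B \<in> sets omega" "Linf_nu r (\<lambda>x. indicator (Xsp - B) x * h x) \<le> ennreal lam"
    "nu B < ennreal M"
    using assms(1) unfolding super_level_def by (auto simp: INF_less_iff)
  obtain S where S: "B \<subseteq> UT S" "(\<integral>\<^sup>+ t. tau t \<partial>count_space S) < ennreal M"
    using B(3) unfolding nu_def UT_def by (auto simp: INF_less_iff)
  have "Linf_nu r (\<lambda>x. indicator (Xsp - UT S) x * h x) \<le> Linf_nu r (\<lambda>x. indicator (Xsp - B) x * h x)"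
    using S(1) assms(2) by (intro Linf_mono) (auto simp: indicator_def)
  then show ?thesis using S B(2) by (meson order_trans)
qed

lemma ell_le_Linf: "ell r g (tree m l n) \<le> Linf_nu r g"
  unfolding Linf_nu_def by (rule SUP_upper2[of "(m,l,n)"]) auto

lemma main_b:
  assumes f: "f \<in> borel_measurable omega" and r: "0 < r" and lam: "0 < lam"
  shows "super_level r f lam \<le> (SUP J. super_level r (\<lambda>x. indicator (XJ J) x * f x) lam)"
    (is "_ \<le> ?L")
proof (rule ennreal_le_epsilon)
  fix e :: real assume Lfin: "?L < top" and e: "0 < e"
  obtain Lr where Lr: "?L = ennreal Lr" "0 \<le> Lr" using Lfin by (cases ?L) auto
  define M where "M = Lr + e"
  have M: "0 < M" using Lr e by (simp add: M_def)
  have LM: "?L + ennreal e = ennreal M" using Lr e by (simp add: M_def)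
  have "\<forall>J. \<exists>S. (\<integral>\<^sup>+ t. tau t \<partial>count_space S) < ennreal M \<and>
             Linf_nu r (\<lambda>x. indicator (Xsp - UT S) x * (indicator (XJ J) x * f x)) \<le> ennreal lam"
  proof
    fix J
    have "super_level r (\<lambda>x. indicator (XJ J) x * f x) lam \<le> ?L" by (rule SUP_upper) auto
    also have "\<dots> < ennreal M" using Lr e by (simp add: M_def)
    finally show "\<exists>S. (\<integral>\<^sup>+ t. tau t \<partial>count_space S) < ennreal M \<and>
             Linf_nu r (\<lambda>x. indicator (Xsp - UT S) x * (indicator (XJ J) x * f x)) \<le> ennreal lam"
      by (rule step1[OF _ r])
  qed
  then obtain SS where SS: "\<And>J. (\<integral>\<^sup>+ t. tau t \<partial>count_space (SS J)) < ennreal M"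
    "\<And>J. Linf_nu r (\<lambda>x. indicator (Xsp - UT (SS J)) x * (indicator (XJ J) x * f x)) \<le> ennreal lam"
    by metis
  obtain \<phi> S where phi: "strict_mono \<phi>" and conv: "\<And>t. \<forall>\<^sub>F k in sequentially. (t \<in> SS (\<phi> k)) = (t \<in> S)"
    using subseq_sets[of SS] by blast
  have sumS: "(\<integral>\<^sup>+ t. tau t \<partial>count_space S) \<le> ennreal M"
  proof -
    have "(\<integral>\<^sup>+ t. tau t \<partial>count_space S) = (\<integral>\<^sup>+ t. tau t * indicator S t \<partial>count_space UNIV)"
      by (rule cs_ind)
    also have "\<dots> = (\<integral>\<^sup>+ t. liminf (\<lambda>k. tau t * indicator (SS (\<phi> k)) t) \<partial>count_space UNIV)"
    proof (rule nn_integral_cong)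
      fix t
      have "\<forall>\<^sub>F k in sequentially. tau t * indicator (SS (\<phi> k)) t = tau t * indicator S t"
        using conv[of t] by (rule eventually_mono) (auto simp: indicator_def)
      then show "tau t * indicator S t = liminf (\<lambda>k. tau t * indicator (SS (\<phi> k)) t)"
        by (intro lim_imp_Liminf[symmetric] tendsto_eventually) auto
    qed
    also have "\<dots> \<le> liminf (\<lambda>k. \<integral>\<^sup>+ t. tau t * indicator (SS (\<phi> k)) t \<partial>count_space UNIV)"
      by (rule nn_integral_liminf) simp
    also have "\<dots> \<le> limsup (\<lambda>k. \<integral>\<^sup>+ t. tau t * indicator (SS (\<phi> k)) t \<partial>count_space UNIV)"
      by (rule Liminf_le_Limsup) simp
    also have "\<dots> \<le> ennreal M"
    proof (rule Limsup_bounded)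
      show "\<forall>\<^sub>F k in sequentially. (\<integral>\<^sup>+ t. tau t * indicator (SS (\<phi> k)) t \<partial>count_space UNIV) \<le> ennreal M"
        using SS(1) by (auto simp: cs_ind[symmetric] less_imp_le)
    qed
    finally show ?thesis .
  qed
  define U where "U = UT S"
  have Uom: "U \<in> sets omega" unfolding U_def by (rule UT_omega)
  have nuU: "nu U \<le> ennreal M" unfolding U_def using nu_UT sumS by (rule order_trans)
  have adm: "Linf_nu r (\<lambda>x. indicator (Xsp - U) x * f x) \<le> ennreal lam"
    unfolding Linf_nu_def
  proof (rule SUP_least, clarify)
    fix m l n
    define T where "T = tree m l n"
    define c where "c = ennreal (lam powr r) * nu T"
    define uk where "uk = (\<lambda>k x. ennreal (norm (indicator T x *
         (indicator (Xsp - UT (SS (\<phi> k))) x * (indicator (XJ (\<phi> k)) x * f x))) powr r))"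
    define u where "u = (\<lambda>x. ennreal (norm (indicator T x * (indicator (Xsp - U) x * f x)) powr r))"
    have Tfin: "nu T < \<infinity>" unfolding T_def by (rule nu_tree_fin)
    have bk: "integral\<^sup>N omega (uk k) \<le> c" for k
    proof -
      have "ell r (\<lambda>x. indicator (Xsp - UT (SS (\<phi> k))) x * (indicator (XJ (\<phi> k)) x * f x)) T \<le> ennreal lam"
        unfolding T_def using ell_le_Linf SS(2) by (rule order_trans)
      then show ?thesis unfolding uk_def c_def using ell_le_iff[OF Tfin r] lam by simp
    qed
    have meas: "uk k \<in> borel_measurable omega" for k
    proof -
      have h: "(\<lambda>x. indicator T x *
         (indicator (Xsp - UT (SS (\<phi> k))) x * (indicator (XJ (\<phi> k)) x * f x))) \<in> borel_measurable omega"
        unfolding T_def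
        by (intro borel_measurable_times ind_meas f sets.Diff Xsp_borel UT_borel tree_borel XJ_borel)
      show ?thesis unfolding uk_def using h by measurable
    qed
    have pw: "u x \<le> liminf (\<lambda>k. uk k x)" if x: "x \<in> Xsp" for x
    proof (cases "x \<in> T \<and> x \<notin> U")
      case False
      then have "u x = 0" unfolding u_def by (auto simp: indicator_def)
      then show ?thesis by simp
    next
      case True
      obtain a s b where xe: "x = (a, s, b)" by (cases x) auto
      define F where "F = {(m,l,n). (a, s, b) \<in> tree m l n \<and> (2::real) powi l \<le> M}"
      have Ffin: "finite F" unfolding F_def by (rule finite_trees_at)
      have "\<forall>t\<in>F. \<forall>\<^sub>F k in sequentially. t \<notin> SS (\<phi> k)"
      proof
        fix t assume "t \<in> F"
        then have "t \<notin> S" using True unfolding F_def U_def xe by (auto simp: mem_UT)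
        then show "\<forall>\<^sub>F k in sequentially. t \<notin> SS (\<phi> k)" using conv[of t] by simp
      qed
      then have ev1: "\<forall>\<^sub>F k in sequentially. \<forall>t\<in>F. t \<notin> SS (\<phi> k)"
        by (rule eventually_ball_finite[OF Ffin])
      obtain J0 where J0: "x \<in> XJ J0" using XJ_cover[OF x] by blast
      have ev2: "\<forall>\<^sub>F k in sequentially. x \<in> XJ (\<phi> k)"
        unfolding eventually_sequentially
      proof (intro exI allI impI)
        fix k assume "J0 \<le> k"
        then have "J0 \<le> \<phi> k" using seq_suble[OF phi, of k] by simp
        then show "x \<in> XJ (\<phi> k)" using XJ_mono J0 by blast
      qed
      have "\<forall>\<^sub>F k in sequentially. uk k x = u x"
        using ev1 ev2
      proof eventually_elim
        case (elim k)
        have "x \<notin> UT (SS (\<phi> k))"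
        proof
          assume "x \<in> UT (SS (\<phi> k))"
          then obtain m' l' n' where t: "(m', l', n') \<in> SS (\<phi> k)" "x \<in> tree m' l' n'"
            by (auto simp: mem_UT)
          have "tau (m', l', n') < ennreal M"
            using tau_le_sum[OF t(1), of] SS(1)[of "\<phi> k"] by (rule le_less_trans)
          then have "2 powi l' < M" by (simp add: tau_def ennreal_less_iff)
          then have "(m', l', n') \<in> F" using t(2) unfolding F_def xe by auto
          then show False using elim(1) t(1) by blast
        qed
        then show ?case using elim(2) True x unfolding uk_def u_def by (simp add: indicator_def)
      qed
      then have "liminf (\<lambda>k. uk k x) = u x"
        by (intro lim_imp_Liminf tendsto_eventually) auto
      then show ?thesis by simp
    qed
    have "integral\<^sup>N omega u \<le> (\<integral>\<^sup>+ x. liminf (\<lambda>k. uk k x) \<partial>omega)"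
      using pw by (intro nn_integral_mono) simp
    also have "\<dots> \<le> liminf (\<lambda>k. integral\<^sup>N omega (uk k))"
      by (rule nn_integral_liminf[OF meas])
    also have "\<dots> \<le> limsup (\<lambda>k. integral\<^sup>N omega (uk k))"
      by (rule Liminf_le_Limsup) simp
    also have "\<dots> \<le> c"
      by (rule Limsup_bounded) (use bk in auto)
    finally have "integral\<^sup>N omega u \<le> c" .
    then show "ell r (\<lambda>x. indicator (Xsp - U) x * f x) (tree m l n) \<le> ennreal lam"
      unfolding T_def[symmetric] using ell_le_iff[OF Tfin r] lam unfolding u_def c_def by simp
  qed
  have "super_level r f lam \<le> nu U"
    unfolding super_level_def using Uom adm by (intro INF_lower) auto
  also have "\<dots> \<le> ?L + ennreal e" using nuU LM by simp
  finally show "super_level r f lam \<le> ?L + ennreal e" .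
qed



lemma norm_XJ_mono: "J \<le> J' \<Longrightarrow> norm (indicator (XJ J) x * f x) \<le> norm (indicator (XJ J') x * (f x :: complex))"
  using XJ_mono[of J J'] by (auto simp: indicator_def)

lemma norm_XJ_le: "norm (indicator (XJ J) x * f x) \<le> norm (f x :: complex)"
  by (auto simp: indicator_def)

lemma SUP_super_level:
  assumes f: "f \<in> borel_measurable omega" and r: "0 < r" and lam: "0 < lam"
  shows "(SUP J. super_level r (\<lambda>x. indicator (XJ J) x * f x) lam) = super_level r f lam"
proof (rule antisym)
  show "(SUP J. super_level r (\<lambda>x. indicator (XJ J) x * f x) lam) \<le> super_level r f lam"
    by (rule SUP_least) (rule super_level_mono[OF norm_XJ_le r])
  show "super_level r f lam \<le> (SUP J. super_level r (\<lambda>x. indicator (XJ J) x * f x) lam)"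
    by (rule main_b[OF f r lam])
qed

theorem lemma5p4:
  fixes q r :: real
  assumes "0 < q" and "0 < r"
  shows "\<exists>C::real. \<forall>f :: pt \<Rightarrow> complex.
           f \<in> borel_measurable omega \<and> Lq_nu q r f < \<infinity> \<longrightarrow>
           (\<exists>J::nat. Lq_nu q r (\<lambda>x. indicator (XJ J) x * f x) \<le> Lq_nu q r f \<and>
                     Lq_nu q r f \<le> ennreal C * Lq_nu q r (\<lambda>x. indicator (XJ J) x * f x))"
proof (rule exI[of _ 2], intro allI impI)
  fix f :: "pt \<Rightarrow> complex"
  assume A: "f \<in> borel_measurable omega \<and> Lq_nu q r f < \<infinity>"
  then have f: "f \<in> borel_measurable omega" and fin: "Lq_nu q r f < \<infinity>" by auto
  define fJ where "fJ = (\<lambda>J x. indicator (XJ J) x * f x)"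
  define I where "I = (\<lambda>h. \<integral>\<^sup>+ lam\<in>{0<..}. ennreal (q * lam powr (q - 1)) * super_level r h lam \<partial>lborel)"
  have LqI: "Lq_nu q r h = enn_powr (I h) (1 / q)" for h unfolding Lq_nu_def I_def ..
  define g where "g = (\<lambda>J lam. ennreal (q * lam powr (q - 1)) * super_level r (fJ J) lam * indicator {0<..} lam)"
  have IJ: "I (fJ J) = integral\<^sup>N lborel (g J)" for J unfolding I_def g_def ..
  have inc: "incseq g"
    unfolding incseq_def le_fun_def g_def fJ_def
    by (auto intro!: mult_right_mono mult_left_mono super_level_mono norm_XJ_mono \<open>0 < r\<close>)
  have gm: "g J \<in> borel_measurable lborel" for J
  proof -
    have "super_level r (fJ J) \<in> borel_measurable lborel"
      by (rule antimono_meas) (rule super_level_anti)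
    then show ?thesis unfolding g_def by measurable
  qed
  have gsup: "(SUP J. g J lam) = ennreal (q * lam powr (q - 1)) * super_level r f lam * indicator {0<..} lam" for lam
  proof (cases "0 < lam")
    case True
    have "(SUP J. g J lam) = ennreal (q * lam powr (q - 1)) * (SUP J. super_level r (fJ J) lam)"
      using True by (simp add: g_def SUP_mult_left_ennreal)
    also have "\<dots> = ennreal (q * lam powr (q - 1)) * super_level r f lam"
      unfolding fJ_def using SUP_super_level[OF f \<open>0 < r\<close> True] by simp
    finally show ?thesis using True by simp
  next
    case False
    then show ?thesis by (simp add: g_def)
  qed
  have Isup: "I f = (SUP J. I (fJ J))"
  proof -
    have "I f = (\<integral>\<^sup>+ lam. (SUP J. g J lam) \<partial>lborel)"
      unfolding I_def gsup ..
    also have "\<dots> = (SUP J. integral\<^sup>N lborel (g J))"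
      by (rule nn_integral_monotone_convergence_SUP[OF inc gm])
    finally show ?thesis unfolding IJ .
  qed
  have first: "Lq_nu q r (fJ J) \<le> Lq_nu q r f" for J
    unfolding fJ_def by (rule Lq_mono[OF norm_XJ_le \<open>0 < r\<close> \<open>0 < q\<close>])
  have Ifin: "I f \<noteq> \<infinity>"
    using fin by (auto simp: LqI enn_powr_def)
  show "\<exists>J. Lq_nu q r (\<lambda>x. indicator (XJ J) x * f x) \<le> Lq_nu q r f \<and>
             Lq_nu q r f \<le> ennreal 2 * Lq_nu q r (\<lambda>x. indicator (XJ J) x * f x)"
  proof (cases "I f = 0")
    case True
    then have "Lq_nu q r f = 0" by (simp add: LqI enn_powr_def)
    then show ?thesis using first[of 0] unfolding fJ_def by auto
  next
    case False
    obtain i where i: "I f = ennreal i" "0 \<le> i" using Ifin by (cases "I f") auto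
    have ipos: "0 < i" using False i by auto
    have q1: "1 < (2::real) powr q" using \<open>0 < q\<close> by simp
    have "i / 2 powr q < i" using ipos q1 by (simp add: divide_less_eq)
    then have "ennreal (i / 2 powr q) < I f" using i ipos by (simp add: ennreal_less_iff)
    then obtain J where J: "ennreal (i / 2 powr q) < I (fJ J)" unfolding Isup by (auto simp: less_SUP_iff)
    have "I (fJ J) \<le> I f" unfolding Isup by (rule SUP_upper) simp
    then obtain iJ where iJ: "I (fJ J) = ennreal iJ" "0 \<le> iJ" using Ifin
      by (cases "I (fJ J)") (auto simp: top_unique)
    have nn: "0 \<le> i / 2 powr q" using i by simp
    have "i / 2 powr q < iJ" using J iJ ennreal_less_iff[OF nn] by simp
    then have lt: "i \<le> 2 powr q * iJ" using q1 by (simp add: divide_less_eq mult.commute)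
    have "i powr (1 / q) \<le> (2 powr q * iJ) powr (1 / q)"
      using lt ipos \<open>0 < q\<close> by (intro powr_mono2) auto
    also have "\<dots> = 2 * iJ powr (1 / q)"
      using iJ \<open>0 < q\<close> by (simp add: powr_mult powr_powr)
    finally have key: "i powr (1 / q) \<le> 2 * iJ powr (1 / q)" .
    have "Lq_nu q r f = ennreal (i powr (1 / q))" using i by (simp add: LqI enn_powr_def)
    also have "\<dots> \<le> ennreal (2 * iJ powr (1 / q))" using key by (rule ennreal_leI)
    also have "\<dots> = ennreal 2 * Lq_nu q r (fJ J)"
      using iJ by (simp add: LqI enn_powr_def ennreal_mult)
    finally show ?thesis using first[of J] unfolding fJ_def by auto
  qed
qed

end
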